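(* Let $A^\infty$ be as in the context. Then (i) $(A^\infty,\ell^2(\mathbb{Z}_+),N)$, with $A^\infty$ acting by its defining representation in which $w|n\rangle=|n+1\rangle$, and (ii) $(A^\infty,\mathcal{H}_+,|D|)$, with $A^\infty$ acting on $\mathcal{H}_+$ via $w|l,m\rangle=|l+1,m+1\rangle$, are both regular spectral triples.
   Context: $\mathbb{N}=\{0,1,2,\dots\}$, $\mathbb{Z}_+=\{1,2,\dots\}$. On $\ell^2(\mathbb{Z}_+)$ with orthonormal basis $\{|n\rangle\}_{n\in\mathbb{Z}_+}$, $w$ is the unilateral shift $w|n\rangle=|n+1\rangle$ and $N|n\rangle=n|n\rangle$. $A^\infty$ is the set of operators $f=\sum_{n\in\mathbb{N}}(f_nw^n+f_{-n-1}(w^* )^{n+1})+\sum_{j,k\in\mathbb{N}}f_{jk}w^j(1-ww^* )(w^* )^k$ with $\{f_n\}_{n\in\mathbb{Z}}$ a rapid decay sequence and $\{f_{jk}\}$ a rapid decay matrix (i.e. $\sup(1+|n|)^p|f_n|<\infty$, $\sup(1+j+k)^p|f_{jk}|<\infty$ for all $p$); it is a $*$-algebra, and any such expression makes sense for any isometry $w$. $\mathcal{H}_+$ is the Hilbert space with orthonormal basis $|l,m\rangle$, $l\in\mathbb{N}+\tfrac12$, $m\in\{-l,-l+1,\dots,l\}$, and $|D|\,|l,m\rangle=(l+\tfrac12)|l,m\rangle$; the operator $|l,m\rangle\mapsto|l+1,m+1\rangle$ is an isometry, used as the image of $w$. A spectral triple $(A,\mathcal{H},D)$ (unital $*$-algebra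 $A$ of bounded operators, self-adjoint $D$ with compact resolvent and $[D,a]$ bounded for all $a\in A$) is regular if $A\cup[D,A]\subset\bigcap_{j\in\mathbb{N}}\mathrm{dom}\,\delta^j$, where $\delta(T)=[|D|,T]$. *)

theory Defs
  imports "HOL-Analysis.Analysis"
begin

section \<open>Operators on l2(I) given by their matrices in an orthonormal basis indexed by 'i\<close>

type_synonym 'i mat = "'i \<Rightarrow> 'i \<Rightarrow> complex"
type_synonym 'i vec = "'i \<Rightarrow> complex"

text \<open>The matrix M has operator norm at most C: its sesquilinear form on finitely
  supported vectors is bounded by C times the product of the l2 norms.\<close>
definition norm_le :: "'i mat \<Rightarrow> real \<Rightarrow> bool" where
  "norm_le M C \<longleftrightarrow> (\<forall>S x y. finite S \<longrightarrow>
      cmod (\<Sum>i\<in>S. \<Sum>j\<in>S. cnj (y i) * M i j * x j)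
        \<le> C * sqrt (\<Sum>i\<in>S. (cmod (x i))\<^sup>2) * sqrt (\<Sum>i\<in>S. (cmod (y i))\<^sup>2))"

definition bounded_op :: "'i mat \<Rightarrow> bool" where
  "bounded_op M \<longleftrightarrow> (\<exists>C. norm_le M C)"

definition l2vec :: "'i vec \<Rightarrow> bool" where
  "l2vec u \<longleftrightarrow> (\<lambda>i. (cmod (u i))\<^sup>2) summable_on UNIV"

definition finite_rank :: "'i mat \<Rightarrow> bool" where
  "finite_rank K \<longleftrightarrow> (\<exists>n::nat. \<exists>u v :: nat \<Rightarrow> 'i vec.
      (\<forall>r<n. l2vec (u r) \<and> l2vec (v r)) \<and>
      (\<forall>i j. K i j = (\<Sum>r<n. u r i * cnj (v r j))))"

definition compact_op :: "'i mat \<Rightarrow> bool" where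
  "compact_op M \<longleftrightarrow> bounded_op M \<and>
     (\<forall>\<epsilon>>0. \<exists>K. finite_rank K \<and> norm_le (\<lambda>i j. M i j - K i j) \<epsilon>)"

definition id_op :: "'i mat" where
  "id_op = (\<lambda>i j. if i = j then 1 else 0)"

definition adj_op :: "'i mat \<Rightarrow> 'i mat" where
  "adj_op M = (\<lambda>i j. cnj (M j i))"

definition mult_op :: "'i mat \<Rightarrow> 'i mat \<Rightarrow> 'i mat" where
  "mult_op M N = (\<lambda>i k. infsum (\<lambda>j. M i j * N j k) UNIV)"

text \<open>A self-adjoint operator D diagonal in the basis, D e_i = d i e_i (maximal domain).
  Its resolvent at the imaginary unit is the diagonal matrix 1/(d i - i).\<close>
definition compact_resolvent :: "('i \<Rightarrow> real) \<Rightarrow> bool" where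
  "compact_resolvent d \<longleftrightarrow>
     compact_op (\<lambda>i j. if i = j then 1 / (complex_of_real (d i) - \<i>) else 0)"

definition comm_op :: "('i \<Rightarrow> real) \<Rightarrow> 'i mat \<Rightarrow> 'i mat" where
  "comm_op d a = (\<lambda>i j. complex_of_real (d i - d j) * a i j)"

definition delta_op :: "('i \<Rightarrow> real) \<Rightarrow> 'i mat \<Rightarrow> 'i mat" where
  "delta_op d T = (\<lambda>i j. complex_of_real (\<bar>d i\<bar> - \<bar>d j\<bar>) * T i j)"

text \<open>T lies in the domain of delta^k for every k.\<close>
definition smooth_op :: "('i \<Rightarrow> real) \<Rightarrow> 'i mat \<Rightarrow> bool" where
  "smooth_op d T \<longleftrightarrow> (\<forall>k::nat. bounded_op ((delta_op d ^^ k) T))"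

definition unital_star_algebra :: "'i mat set \<Rightarrow> bool" where
  "unital_star_algebra A \<longleftrightarrow>
     (\<forall>a\<in>A. bounded_op a) \<and> id_op \<in> A \<and>
     (\<forall>a\<in>A. \<forall>b\<in>A. (\<lambda>i j. a i j + b i j) \<in> A) \<and>
     (\<forall>a\<in>A. \<forall>c::complex. (\<lambda>i j. c * a i j) \<in> A) \<and>
     (\<forall>a\<in>A. adj_op a \<in> A) \<and>
     (\<forall>a\<in>A. \<forall>b\<in>A. mult_op a b \<in> A)"

definition spectral_triple :: "'i mat set \<Rightarrow> ('i \<Rightarrow> real) \<Rightarrow> bool" where
  "spectral_triple A d \<longleftrightarrow>
     unital_star_algebra A \<and> compact_resolvent d \<and>
     (\<forall>a\<in>A. bounded_op (comm_op d a))"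

definition regular_spectral_triple :: "'i mat set \<Rightarrow> ('i \<Rightarrow> real) \<Rightarrow> bool" where
  "regular_spectral_triple A d \<longleftrightarrow>
     spectral_triple A d \<and> (\<forall>a\<in>A. smooth_op d a \<and> smooth_op d (comm_op d a))"

definition rapid_seq :: "(int \<Rightarrow> complex) \<Rightarrow> bool" where
  "rapid_seq f \<longleftrightarrow> (\<forall>p::nat. \<exists>C. \<forall>n. (1 + real_of_int \<bar>n\<bar>) ^ p * cmod (f n) \<le> C)"

definition rapid_mat :: "(nat \<Rightarrow> nat \<Rightarrow> complex) \<Rightarrow> bool" where
  "rapid_mat g \<longleftrightarrow> (\<forall>p::nat. \<exists>C. \<forall>j k. (1 + real j + real k) ^ p * cmod (g j k) \<le> C)"

text \<open>Matrix entries <e_a, f e_b> of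
  f = sum_n (f_n w^n + f_(-n-1) (w^*)^(n+1)) + sum_(j,k) g_jk w^j (1 - w w^*) (w^*)^k
  for the isometry w e_i = e_(\<sigma> i) given by an injective map \<sigma> of the basis.\<close>
definition rep_op :: "('i \<Rightarrow> 'i) \<Rightarrow> (int \<Rightarrow> complex) \<Rightarrow> (nat \<Rightarrow> nat \<Rightarrow> complex) \<Rightarrow> 'i mat" where
  "rep_op \<sigma> f g = (\<lambda>a b.
      (\<Sum>n. if a = (\<sigma> ^^ n) b then f (int n) else 0)
    + (\<Sum>n. if b = (\<sigma> ^^ (Suc n)) a then f (- int n - 1) else 0)
    + (\<Sum>j. \<Sum>k. if (\<exists>c. c \<notin> range \<sigma> \<and> a = (\<sigma> ^^ j) c \<and> b = (\<sigma> ^^ k) c)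
                   then g j k else 0))"

definition A_infty :: "('i \<Rightarrow> 'i) \<Rightarrow> 'i mat set" where
  "A_infty \<sigma> = {rep_op \<sigma> f g | f g. rapid_seq f \<and> rapid_mat g}"

text \<open>Basis of l2(Z_+).\<close>
typedef zplus = "{n::nat. 1 \<le> n}"
  by (rule exI[of _ 1]) simp

definition shift_zp :: "zplus \<Rightarrow> zplus" where
  "shift_zp n = Abs_zplus (Rep_zplus n + 1)"

definition N_zp :: "zplus \<Rightarrow> real" where
  "N_zp n = real (Rep_zplus n)"

text \<open>Basis |l,m> of H_+: l in N + 1/2, m in {-l, -l+1, ..., l}.\<close>
typedef hidx = "{(l::real, m::real). (\<exists>k::nat. l = real k + 1/2) \<and>
                   (\<exists>i::nat. m = - l + real i) \<and> m \<le> l}"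
  by (rule exI[of _ "(1/2, 1/2)"]) (auto intro!: exI[of _ 0] exI[of _ 1])

definition shift_h :: "hidx \<Rightarrow> hidx" where
  "shift_h x = Abs_hidx (fst (Rep_hidx x) + 1, snd (Rep_hidx x) + 1)"

definition absD_h :: "hidx \<Rightarrow> real" where
  "absD_h x = fst (Rep_hidx x) + 1/2"

end

theory Submission
  imports Defs
begin

definition wz :: "int \<Rightarrow> real" where "wz z = 1 / (1 + real_of_int \<bar>z\<bar>)^2"

lemma wz_pos: "0 \<le> wz z" unfolding wz_def by simp

lemma wn_summable: "(\<lambda>n::nat. 1 / (1 + real n)^2) summable_on UNIV"
proof -
  have "summable (\<lambda>n::nat. inverse (real n ^ 2))"
    using inverse_power_summable[of 2, where 'a=real] by simp
  then have "summable (\<lambda>n::nat. inverse (real (Suc n) ^ 2))"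
    by (subst summable_Suc_iff)
  then have "summable (\<lambda>n::nat. 1 / (1 + real n)^2)"
    by (simp add: inverse_eq_divide)
  then show ?thesis by (rule summable_nonneg_imp_summable_on) simp
qed

lemma wz_summable: "wz summable_on UNIV"
proof -
  have 1: "wz summable_on range int"
    by (subst summable_on_reindex) (auto simp: o_def wz_def wn_summable)
  have "(\<lambda>n::nat. 1 / (2 + real n)^2) summable_on UNIV"
  proof (rule summable_on_comparison_test[OF wn_summable])
    fix n :: nat
    show "1 / (2 + real n)^2 \<le> 1 / (1 + real n)^2"
      by (rule divide_left_mono) (auto intro!: power_mono)
  qed simp
  then have 2: "wz summable_on range (\<lambda>n::nat. - int n - 1)"
    by (subst summable_on_reindex) (auto simp: inj_on_def o_def wz_def add.commute)
  have "UNIV = range int \<union> range (\<lambda>n::nat. - int n - 1)"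
  proof -
    have "z \<in> range int \<union> range (\<lambda>n::nat. - int n - 1)" for z
    proof (cases "z \<ge> 0")
      case True then show ?thesis by (auto intro: image_eqI[of _ _ "nat z"])
    next
      case False then show ?thesis by (auto intro!: image_eqI[of _ _ "nat (- z - 1)"] UnI2)
    qed
    then show ?thesis by auto
  qed
  then show ?thesis using summable_on_union[OF 1 2] by simp
qed

lemma cbound:
  fixes X :: "'a \<Rightarrow> complex" and w :: "'a \<Rightarrow> real"
  assumes w: "w summable_on A" and wp: "\<And>i. i \<in> A \<Longrightarrow> 0 \<le> w i"
    and b: "\<And>i. i \<in> A \<Longrightarrow> norm (X i) \<le> B * w i"
  shows "X summable_on A" "norm (infsum X A) \<le> B * infsum w A"
proof -
  have Bw: "(\<lambda>i. B * w i) summable_on A" using w by (rule summable_on_cmult_right)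
  have n: "(\<lambda>i. norm (X i)) summable_on A"
    by (rule summable_on_comparison_test[OF Bw]) (use b in auto)
  then show "X summable_on A" by (simp add: summable_on_iff_abs_summable_on_complex)
  have "norm (infsum X A) \<le> infsum (\<lambda>i. norm (X i)) A" by (rule norm_infsum_bound[OF n])
  also have "\<dots> \<le> infsum (\<lambda>i. B * w i) A" by (rule infsum_mono[OF n Bw b])
  also have "\<dots> = B * infsum w A" by (rule infsum_cmult_right) (use w in auto)
  finally show "norm (infsum X A) \<le> B * infsum w A" .
qed

lemma cbound_w:
  fixes X :: "'a \<Rightarrow> complex" and w :: "'a \<Rightarrow> real"
  assumes w: "w summable_on A" and wp: "\<And>i. i \<in> A \<Longrightarrow> 0 \<le> w i" and W: "0 \<le> W"
    and b: "\<And>i. i \<in> A \<Longrightarrow> W * norm (X i) \<le> B * w i"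
  shows "W * norm (infsum X A) \<le> B * infsum w A"
proof (cases "W = 0")
  case True
  have "0 \<le> B * w i" if "i \<in> A" for i
    using b[OF that] True by simp
  have "0 \<le> infsum (\<lambda>i. B * w i) A" by (rule infsum_nonneg) fact
  also have "\<dots> = B * infsum w A" by (rule infsum_cmult_right) (use w in auto)
  finally show ?thesis using True by simp
next
  case False
  then have Wp: "W > 0" using W by simp
  have "norm (infsum X A) \<le> (B / W) * infsum w A"
    by (rule cbound(2)[OF w wp]) (use b Wp in \<open>auto simp: field_simps\<close>)
  then show ?thesis using Wp by (simp add: field_simps)
qed

lemma sq_le_sqrt: fixes T P Q :: real
  assumes "T\<^sup>2 \<le> P * Q" "0 \<le> T"
  shows "T \<le> sqrt P * sqrt Q"
proof -
  have "T = sqrt (T\<^sup>2)" using assms(2) by simp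
  also have "\<dots> \<le> sqrt (P * Q)" using assms(1) by (rule real_sqrt_le_mono)
  also have "\<dots> = sqrt P * sqrt Q" by (rule real_sqrt_mult)
  finally show ?thesis .
qed

lemma sum_SS: "(\<Sum>p\<in>A\<times>B. g p) = (\<Sum>i\<in>A. \<Sum>j\<in>B. g (i,j))"
  by (simp add: sum.cartesian_product)

lemma schur:
  fixes M :: "'i mat"
  assumes row: "\<And>S i. finite S \<Longrightarrow> (\<Sum>j\<in>S. cmod (M i j)) \<le> R"
    and col: "\<And>S j. finite S \<Longrightarrow> (\<Sum>i\<in>S. cmod (M i j)) \<le> R"
  shows "norm_le M R"
  unfolding norm_le_def
proof (intro allI impI)
  fix S :: "'i set" and x y :: "'i vec"
  assume S: "finite S"
  have R0: "0 \<le> R" using row[of "{}"] by simp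
  define a where "a p = cmod (y (fst p)) * sqrt (cmod (M (fst p) (snd p)))" for p
  define b where "b p = sqrt (cmod (M (fst p) (snd p))) * cmod (x (snd p))" for p
  have "cmod (\<Sum>i\<in>S. \<Sum>j\<in>S. cnj (y i) * M i j * x j)
      \<le> (\<Sum>i\<in>S. cmod (\<Sum>j\<in>S. cnj (y i) * M i j * x j))" by (rule norm_sum)
  also have "\<dots> \<le> (\<Sum>i\<in>S. \<Sum>j\<in>S. cmod (cnj (y i) * M i j * x j))"
    by (intro sum_mono norm_sum)
  also have "\<dots> = (\<Sum>p\<in>S\<times>S. a p * b p)"
    unfolding sum_SS a_def b_def
    by (intro sum.cong refl) (simp add: norm_mult mult_ac real_sqrt_mult_self)
  finally have 1: "cmod (\<Sum>i\<in>S. \<Sum>j\<in>S. cnj (y i) * M i j * x j) \<le> (\<Sum>p\<in>S\<times>S. a p * b p)" .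
  have 2: "(\<Sum>p\<in>S\<times>S. a p * b p)\<^sup>2 \<le> (\<Sum>p\<in>S\<times>S. (a p)\<^sup>2) * (\<Sum>p\<in>S\<times>S. (b p)\<^sup>2)"
    by (rule Cauchy_Schwarz_ineq_sum)
  have "(\<Sum>p\<in>S\<times>S. (a p)\<^sup>2) = (\<Sum>i\<in>S. (cmod (y i))\<^sup>2 * (\<Sum>j\<in>S. cmod (M i j)))"
    unfolding sum_SS a_def
    by (simp add: power_mult_distrib sum_distrib_left)
  also have "\<dots> \<le> (\<Sum>i\<in>S. (cmod (y i))\<^sup>2 * R)"
    by (intro sum_mono mult_left_mono row S) simp
  finally have 3: "(\<Sum>p\<in>S\<times>S. (a p)\<^sup>2) \<le> R * (\<Sum>i\<in>S. (cmod (y i))\<^sup>2)"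
    by (simp add: sum_distrib_left mult_ac)
  have "(\<Sum>p\<in>S\<times>S. (b p)\<^sup>2) = (\<Sum>j\<in>S. (cmod (x j))\<^sup>2 * (\<Sum>i\<in>S. cmod (M i j)))"
    unfolding sum_SS b_def
    by (subst sum.swap) (simp add: power_mult_distrib sum_distrib_left sum_distrib_right mult_ac)
  also have "\<dots> \<le> (\<Sum>j\<in>S. (cmod (x j))\<^sup>2 * R)"
    by (intro sum_mono mult_left_mono col S) simp
  finally have 4: "(\<Sum>p\<in>S\<times>S. (b p)\<^sup>2) \<le> R * (\<Sum>j\<in>S. (cmod (x j))\<^sup>2)"
    by (simp add: sum_distrib_left mult_ac)
  have "(\<Sum>p\<in>S\<times>S. a p * b p)\<^sup>2 \<le> (R * (\<Sum>i\<in>S. (cmod (y i))\<^sup>2)) * (R * (\<Sum>j\<in>S. (cmod (x j))\<^sup>2))"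
    using 2 3 4 by (meson order_trans mult_mono sum_nonneg zero_le_power2 R0 mult_nonneg_nonneg)
  then have "(\<Sum>p\<in>S\<times>S. a p * b p) \<le> sqrt (R * (\<Sum>i\<in>S. (cmod (y i))\<^sup>2)) * sqrt (R * (\<Sum>j\<in>S. (cmod (x j))\<^sup>2))"
    by (rule sq_le_sqrt) (auto simp: a_def b_def intro!: sum_nonneg)
  also have "\<dots> = R * sqrt (\<Sum>j\<in>S. (cmod (x j))\<^sup>2) * sqrt (\<Sum>i\<in>S. (cmod (y i))\<^sup>2)"
    using R0 by (simp add: real_sqrt_mult)
  finally show "cmod (\<Sum>i\<in>S. \<Sum>j\<in>S. cnj (y i) * M i j * x j)
        \<le> R * sqrt (\<Sum>i\<in>S. (cmod (x i))\<^sup>2) * sqrt (\<Sum>i\<in>S. (cmod (y i))\<^sup>2)"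
    using 1 by linarith
qed

lemma suminf_single_if: "(\<Sum>n::nat. if P \<and> n = k then c n else (0::complex)) = (if P then c k else 0)"
proof (cases P)
  case True
  have "(\<lambda>n. if n = k then c n else 0) sums c k" by (rule sums_single)
  then have "(\<Sum>n. if n = k then c n else 0) = c k" by (metis sums_unique)
  then show ?thesis using True by simp
qed simp

locale orb =
  fixes \<sigma> :: "'i \<Rightarrow> 'i" and root :: "'i \<Rightarrow> 'i" and ht :: "'i \<Rightarrow> nat"
  assumes inj: "inj \<sigma>" and root_nr: "root x \<notin> range \<sigma>" and decomp: "(\<sigma>^^ht x) (root x) = x"
begin

lemma uniq_aux: "c \<notin> range \<sigma> \<Longrightarrow> (\<sigma>^^n) c = (\<sigma>^^(n + m)) c' \<Longrightarrow> c = (\<sigma>^^m) c'"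
proof -
  assume c: "c \<notin> range \<sigma>" and e: "(\<sigma>^^n) c = (\<sigma>^^(n + m)) c'"
  have "(\<sigma>^^n) c = (\<sigma>^^n) ((\<sigma>^^m) c')" using e by (simp add: funpow_add)
  then show ?thesis using inj_fn[OF inj, of n] by (simp add: inj_eq)
qed

lemma notin_range_pow: "c \<notin> range \<sigma> \<Longrightarrow> c = (\<sigma>^^m) c' \<Longrightarrow> m = 0"
proof (cases m)
  case (Suc m')
  assume "c \<notin> range \<sigma>" "c = (\<sigma>^^m) c'"
  then have "c = \<sigma> ((\<sigma>^^m') c')" using Suc by simp
  then have "c \<in> range \<sigma>" by (rule image_eqI) simp
  then show ?thesis using \<open>c \<notin> range \<sigma>\<close> by contradiction
qed simp

lemma uniq:
  assumes c: "c \<notin> range \<sigma>" and c': "c' \<notin> range \<sigma>" and e: "(\<sigma>^^n) c = (\<sigma>^^n') c'"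
  shows "c = c' \<and> n = n'"
proof (cases "n \<le> n'")
  case True
  define m where "m = n' - n"
  have m: "n' = n + m" using True unfolding m_def by simp
  have 1: "c = (\<sigma>^^m) c'" using uniq_aux[OF c] e unfolding m by blast
  have "m = 0" by (rule notin_range_pow[OF c 1])
  then show ?thesis using 1 m by simp
next
  case False
  define m where "m = n - n'"
  have m: "n = n' + m" using False unfolding m_def by simp
  have 1: "c' = (\<sigma>^^m) c" using uniq_aux[OF c'] e[symmetric] unfolding m by blast
  have "m = 0" by (rule notin_range_pow[OF c' 1])
  then show ?thesis using 1 m by simp
qed

lemma root_ht_pow: "c \<notin> range \<sigma> \<Longrightarrow> root ((\<sigma>^^n) c) = c \<and> ht ((\<sigma>^^n) c) = n"
proof -
  assume c: "c \<notin> range \<sigma>"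
  have "(\<sigma>^^ht ((\<sigma>^^n) c)) (root ((\<sigma>^^n) c)) = (\<sigma>^^n) c" by (rule decomp)
  from uniq[OF root_nr c this] show ?thesis .
qed

lemma root_pow: "c \<notin> range \<sigma> \<Longrightarrow> root ((\<sigma>^^n) c) = c"
  using root_ht_pow by blast

lemma ht_pow: "c \<notin> range \<sigma> \<Longrightarrow> ht ((\<sigma>^^n) c) = n"
  using root_ht_pow by blast

lemma same: "root a = root b \<Longrightarrow> ht a = ht b \<Longrightarrow> a = b"
proof -
  assume "root a = root b" "ht a = ht b"
  then have "(\<sigma>^^ht a) (root a) = (\<sigma>^^ht b) (root b)" by simp
  then show "a = b" by (simp only: decomp)
qed

lemma pow_iff: "a = (\<sigma>^^n) b \<longleftrightarrow> root a = root b \<and> ht a = ht b + n"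
proof
  assume a: "a = (\<sigma>^^n) b"
  have "a = (\<sigma>^^(n + ht b)) (root b)" using a decomp[of b] by (simp add: funpow_add)
  then show "root a = root b \<and> ht a = ht b + n"
    using root_pow[OF root_nr] ht_pow[OF root_nr] by simp
next
  assume "root a = root b \<and> ht a = ht b + n"
  then show "a = (\<sigma>^^n) b" using decomp[of a] decomp[of b]
    by (metis add.commute comp_apply funpow_add)
qed

lemma orbit_iff: "(\<exists>c. c \<notin> range \<sigma> \<and> a = (\<sigma>^^j) c \<and> b = (\<sigma>^^k) c)
    \<longleftrightarrow> root a = root b \<and> j = ht a \<and> k = ht b"
proof
  assume "\<exists>c. c \<notin> range \<sigma> \<and> a = (\<sigma>^^j) c \<and> b = (\<sigma>^^k) c"
  then obtain c where "c \<notin> range \<sigma>" "a = (\<sigma>^^j) c" "b = (\<sigma>^^k) c" by blast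
  then show "root a = root b \<and> j = ht a \<and> k = ht b" using root_pow ht_pow by simp
next
  assume "root a = root b \<and> j = ht a \<and> k = ht b"
  then show "\<exists>c. c \<notin> range \<sigma> \<and> a = (\<sigma>^^j) c \<and> b = (\<sigma>^^k) c"
    using decomp root_nr by metis
qed

lemma rep_eq: "rep_op \<sigma> f g a b =
   (if root a = root b then f (int (ht a) - int (ht b)) + g (ht a) (ht b) else 0)"
proof -
  have s1: "(\<Sum>n. if a = (\<sigma> ^^ n) b then f (int n) else 0)
       = (if root a = root b \<and> ht b \<le> ht a then f (int (ht a - ht b)) else 0)"
  proof -
    have e: "(a = (\<sigma> ^^ n) b) = ((root a = root b \<and> ht b \<le> ht a) \<and> n = ht a - ht b)" for n
      using pow_iff[of a n b] by auto
    have "(\<lambda>n. if a = (\<sigma> ^^ n) b then f (int n) else 0)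
        = (\<lambda>n. if (root a = root b \<and> ht b \<le> ht a) \<and> n = ht a - ht b then f (int n) else 0)"
      by (simp only: e)
    then show ?thesis by (simp only: suminf_single_if)
  qed
  have s2: "(\<Sum>n. if b = (\<sigma> ^^ Suc n) a then f (- int n - 1) else 0)
       = (if root a = root b \<and> ht a < ht b then f (- int (ht b - ht a - 1) - 1) else 0)"
  proof -
    have e: "(b = (\<sigma> ^^ Suc n) a) = ((root a = root b \<and> ht a < ht b) \<and> n = ht b - ht a - 1)" for n
      using pow_iff[of b "Suc n" a] by auto
    have "(\<lambda>n. if b = (\<sigma> ^^ Suc n) a then f (- int n - 1) else 0)
        = (\<lambda>n. if (root a = root b \<and> ht a < ht b) \<and> n = ht b - ht a - 1 then f (- int n - 1) else 0)"
      by (simp only: e)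
    then show ?thesis by (simp only: suminf_single_if)
  qed
  have s3: "(\<Sum>j. \<Sum>k. if (\<exists>c. c \<notin> range \<sigma> \<and> a = (\<sigma> ^^ j) c \<and> b = (\<sigma> ^^ k) c) then g j k else 0)
      = (if root a = root b then g (ht a) (ht b) else 0)"
  proof -
    have "(\<lambda>j. \<Sum>k. if (\<exists>c. c \<notin> range \<sigma> \<and> a = (\<sigma> ^^ j) c \<and> b = (\<sigma> ^^ k) c) then g j k else 0)
       = (\<lambda>j. \<Sum>k. if (root a = root b \<and> j = ht a) \<and> k = ht b then g j k else 0)"
      by (simp only: orbit_iff conj_assoc)
    also have "\<dots> = (\<lambda>j. if root a = root b \<and> j = ht a then g j (ht b) else 0)"
      by (simp only: suminf_single_if)
    finally show ?thesis by (simp only: suminf_single_if)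
  qed
  show ?thesis unfolding rep_op_def s1 s2 s3
    by (auto simp: of_nat_diff)
qed

end

definition toep :: "(int \<Rightarrow> complex) \<Rightarrow> (nat \<Rightarrow> nat \<Rightarrow> complex) \<Rightarrow> nat \<Rightarrow> nat \<Rightarrow> complex" where
  "toep f g m k = f (int m - int k) + g m k"

lemma wz_sym: "wz (int m - int n) = wz (int n - int m)"
  unfolding wz_def by (simp add: abs_minus_commute)

lemma decay:
  assumes f: "rapid_seq f" and g: "rapid_mat g"
  shows "\<exists>C. \<forall>m n. cmod ((of_int (int m - int n))^e * toep f g m n) \<le> C * wz (int m - int n)"
proof -
  obtain C1 where C1: "\<And>z. (1 + real_of_int \<bar>z\<bar>) ^ (e+2) * cmod (f z) \<le> C1"
    using f unfolding rapid_seq_def by blast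
  obtain C2 where C2: "\<And>j k. (1 + real j + real k) ^ (e+2) * cmod (g j k) \<le> C2"
    using g unfolding rapid_mat_def by blast
  have "cmod ((of_int (int m - int n))^e * toep f g m n) \<le> (C1 + C2) * wz (int m - int n)" for m n
  proof -
    define t where "t = 1 + real_of_int \<bar>int m - int n\<bar>"
    have t1: "1 \<le> t" unfolding t_def by simp
    have tmn: "t \<le> 1 + real m + real n" unfolding t_def by linarith
    have a: "cmod ((of_int (int m - int n))^e * toep f g m n) \<le> t^e * (cmod (f (int m - int n)) + cmod (g m n))"
    proof -
      have "cmod ((of_int (int m - int n))^e :: complex) = \<bar>real_of_int (int m - int n)\<bar>^e"
        by (simp only: norm_power norm_of_int)
      also have "\<dots> \<le> t^e" unfolding t_def by (intro power_mono) auto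
      finally have 1: "cmod ((of_int (int m - int n))^e :: complex) \<le> t^e" .
      have 2: "cmod (toep f g m n) \<le> cmod (f (int m - int n)) + cmod (g m n)"
        unfolding toep_def by (rule norm_triangle_ineq)
      show ?thesis unfolding norm_mult by (rule mult_mono[OF 1 2]) (use t1 in auto)
    qed
    have b: "t^(e+2) * cmod (f (int m - int n)) \<le> C1" using C1[of "int m - int n"] unfolding t_def .
    have c: "t^(e+2) * cmod (g m n) \<le> C2"
    proof -
      have "t^(e+2) * cmod (g m n) \<le> (1 + real m + real n)^(e+2) * cmod (g m n)"
        by (intro mult_right_mono power_mono tmn) (use t1 in auto)
      then show ?thesis using C2[of m n] by linarith
    qed
    have "t^2 * (t^e * (cmod (f (int m - int n)) + cmod (g m n))) \<le> C1 + C2"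
    proof -
      have "t^2 * (t^e * (cmod (f (int m - int n)) + cmod (g m n)))
          = t^(e+2) * cmod (f (int m - int n)) + t^(e+2) * cmod (g m n)"
        by (simp add: algebra_simps power_add power2_eq_square)
      then show ?thesis using b c by linarith
    qed
    then have "t^e * (cmod (f (int m - int n)) + cmod (g m n)) \<le> (C1 + C2) / t^2"
      using t1 by (simp add: field_simps)
    also have "\<dots> = (C1 + C2) * wz (int m - int n)" unfolding wz_def t_def by simp
    finally show ?thesis using a by linarith
  qed
  then show ?thesis by blast
qed

context orb
begin

definition Om :: "(nat \<Rightarrow> nat \<Rightarrow> complex) \<Rightarrow> 'i mat" where
  "Om K = (\<lambda>a b. if root a = root b then K (ht a) (ht b) else 0)"

lemma A_mem: "M \<in> A_infty \<sigma> \<longleftrightarrow> (\<exists>f g. rapid_seq f \<and> rapid_mat g \<and> M = Om (toep f g))"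
proof -
  have "rep_op \<sigma> f g = Om (toep f g)" for f g
    unfolding Om_def toep_def by (simp add: fun_eq_iff rep_eq)
  then show ?thesis unfolding A_infty_def by auto
qed

lemma om_row:
  assumes K: "\<And>m n. cmod (K m n) \<le> C * wz (int m - int n)" and S: "finite S"
  shows "(\<Sum>b\<in>S. cmod (Om K a b)) \<le> C * infsum wz UNIV"
proof -
  define S' where "S' = {b\<in>S. root b = root a}"
  define h where "h b = int (ht a) - int (ht b)" for b
  have C0: "0 \<le> C" using K[of 0 0] norm_ge_zero[of "K 0 0"] by (simp add: wz_def del: norm_ge_zero)
  have inj: "inj_on h S'"
    unfolding inj_on_def S'_def h_def using same by auto
  have "(\<Sum>b\<in>S. cmod (Om K a b)) = (\<Sum>b\<in>S'. cmod (K (ht a) (ht b)))"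
    unfolding S'_def Om_def by (subst sum.inter_filter[OF S]) (auto intro!: sum.cong)
  also have "\<dots> \<le> (\<Sum>b\<in>S'. C * wz (h b))"
    unfolding h_def by (intro sum_mono K)
  also have "\<dots> = C * (\<Sum>z\<in>h ` S'. wz z)"
    by (simp add: sum_distrib_left sum.reindex[OF inj])
  also have "\<dots> \<le> C * infsum wz UNIV"
    by (intro mult_left_mono C0 finite_sum_le_infsum wz_summable)
       (auto simp: wz_pos S'_def S)
  finally show ?thesis .
qed

lemma om_bounded:
  assumes K: "\<And>m n. cmod (K m n) \<le> C * wz (int m - int n)"
  shows "bounded_op (Om K)"
  unfolding bounded_op_def
proof (intro exI schur)
  fix S :: "'i set" and i assume S: "finite S"
  show "(\<Sum>j\<in>S. cmod (Om K i j)) \<le> C * infsum wz UNIV" by (rule om_row[OF K S])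
next
  fix S :: "'i set" and j assume S: "finite S"
  have K': "cmod (K n m) \<le> C * wz (int m - int n)" for m n using K[of n m] wz_sym by simp
  have "(\<Sum>i\<in>S. cmod (Om K i j)) = (\<Sum>i\<in>S. cmod (Om (\<lambda>m n. K n m) j i))"
    unfolding Om_def by (intro sum.cong) auto
  also have "\<dots> \<le> C * infsum wz UNIV" by (rule om_row[OF K' S])
  finally show "(\<Sum>i\<in>S. cmod (Om K i j)) \<le> C * infsum wz UNIV" .
qed

lemma toep_bounded_pow:
  assumes f: "rapid_seq f" and g: "rapid_mat g"
  shows "bounded_op (Om (\<lambda>m n. (of_int (int m - int n))^e * toep f g m n))"
proof -
  obtain C where "\<forall>m n. cmod ((of_int (int m - int n))^e * toep f g m n) \<le> C * wz (int m - int n)"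
    using decay[OF f g] by blast
  then show ?thesis by (intro om_bounded) blast
qed

end

lemma prodbound:
  fixes W A B N C1 C2 :: real and x y :: complex
  assumes W0: "0 \<le> W" and WAB: "W \<le> A * B" and A1: "1 \<le> A" and N1: "1 \<le> N" and NB: "N \<le> B"
    and hx: "A^p * cmod x \<le> C1" and hy: "B^(p+2) * cmod y \<le> C2"
  shows "W^p * cmod (x * y) \<le> (C1 * C2) * (1 / (N^2))"
proof -
  have B1: "1 \<le> B" using N1 NB by linarith
  have C10: "0 \<le> C1" using hx A1 by (meson order_trans mult_nonneg_nonneg norm_ge_zero zero_le_power zero_le_one)
  have "W^p \<le> (A*B)^p" by (rule power_mono[OF WAB W0])
  then have "W^p * (cmod x * cmod y) \<le> (A*B)^p * (cmod x * cmod y)"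
    by (rule mult_right_mono) simp
  then have "W^p * cmod (x * y) \<le> (A^p * cmod x) * (B^p * cmod y)"
    by (simp add: norm_mult power_mult_distrib mult_ac)
  also have "\<dots> \<le> C1 * (B^p * cmod y)"
    by (rule mult_right_mono[OF hx]) (use B1 in simp)
  also have "B^p * cmod y \<le> C2 / B^2"
  proof -
    have eq: "B^(p+2) * cmod y = B^2 * (B^p * cmod y)" by (simp only: power_add ac_simps)
    have "B^2 * (B^p * cmod y) \<le> C2" using hy unfolding eq .
    then have h: "(B^p * cmod y) * B^2 \<le> C2" by (simp only: mult.commute)
    have "0 < B^2" using B1 by simp
    then show ?thesis using h by (simp only: pos_le_divide_eq)
  qed
  then have "C1 * (B^p * cmod y) \<le> C1 * (C2 / B^2)" by (rule mult_left_mono) (rule C10)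
  also have "C1 * (C2 / B^2) \<le> C1 * (C2 / N^2)"
  proof (rule mult_left_mono[OF _ C10])
    have C20: "0 \<le> C2" using hy B1 by (meson order_trans mult_nonneg_nonneg norm_ge_zero zero_le_power zero_le_one)
    show "C2 / B^2 \<le> C2 / N^2"
      by (rule divide_left_mono[OF _ C20]) (use N1 NB in \<open>auto intro!: power_mono\<close>)
  qed
  finally show ?thesis by simp
qed

lemma wgt: fixes a b W :: real
  assumes "0 \<le> a" "0 \<le> b" "W \<le> 1 + a + b" shows "W \<le> (1 + a) * (1 + b)"
proof -
  have "0 \<le> a * b" using assms by simp
  have "(1 + a) * (1 + b) = 1 + a + b + a * b" by (simp add: algebra_simps)
  then show ?thesis using assms \<open>0 \<le> a * b\<close> by linarith
qed

lemma rapid_seqD: "rapid_seq f \<Longrightarrow> \<exists>C. \<forall>z. (1 + real_of_int \<bar>z\<bar>)^p * cmod (f z) \<le> C"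
  unfolding rapid_seq_def by blast

lemma rapid_matD: "rapid_mat g \<Longrightarrow> \<exists>C. \<forall>j k. (1 + real j + real k)^p * cmod (g j k) \<le> C"
  unfolding rapid_mat_def by blast

lemma wn_wz: "1 / (1 + real n)^2 = wz (int n)" unfolding wz_def by simp

lemma natsum_rapid:
  fixes X :: "nat \<Rightarrow> nat \<Rightarrow> nat \<Rightarrow> complex"
  assumes H: "\<And>p. \<exists>C. \<forall>m k n. (1 + real m + real k)^p * cmod (X m k n) \<le> C * (1 / (1 + real n)^2)"
  shows "\<And>m k. X m k summable_on UNIV" "rapid_mat (\<lambda>m k. infsum (X m k) UNIV)"
proof -
  fix m k
  obtain C where C: "\<forall>m k n. (1 + real m + real k)^0 * cmod (X m k n) \<le> C * (1 / (1 + real n)^2)"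
    using H by blast
  show "X m k summable_on UNIV"
    by (rule cbound(1)[OF wn_summable]) (use C in auto)
next
  show "rapid_mat (\<lambda>m k. infsum (X m k) UNIV)"
    unfolding rapid_mat_def
  proof
    fix p
    obtain C where C: "\<forall>m k n. (1 + real m + real k)^p * cmod (X m k n) \<le> C * (1 / (1 + real n)^2)"
      using H by blast
    have "(1 + real m + real k)^p * cmod (infsum (X m k) UNIV) \<le> C * infsum (\<lambda>n::nat. 1 / (1 + real n)^2) UNIV" for m k
      by (rule cbound_w[OF wn_summable]) (use C in auto)
    then show "\<exists>C. \<forall>m k. (1 + real m + real k)^p * cmod (infsum (X m k) UNIV) \<le> C" by blast
  qed
qed

lemma T2_rapid:
  assumes f: "rapid_seq f" and g': "rapid_mat g'"
  shows "\<And>p. \<exists>C. \<forall>m k n. (1 + real m + real k)^p * cmod (f (int m - int n) * g' n k) \<le> C * (1 / (1 + real n)^2)"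
proof -
  fix p
  obtain C1 where C1: "\<forall>z. (1 + real_of_int \<bar>z\<bar>)^p * cmod (f z) \<le> C1" using rapid_seqD[OF f] by blast
  obtain C2 where C2: "\<forall>j k. (1 + real j + real k)^(p+2) * cmod (g' j k) \<le> C2" using rapid_matD[OF g'] by blast
  have "(1 + real m + real k)^p * cmod (f (int m - int n) * g' n k) \<le> (C1 * C2) * (1 / (1 + real n)^2)" for m k n
  proof (rule prodbound[where A="1 + real_of_int \<bar>int m - int n\<bar>" and B="1 + real n + real k"])
    show "1 + real m + real k \<le> (1 + real_of_int \<bar>int m - int n\<bar>) * (1 + real n + real k)"
      using wgt[of "real_of_int \<bar>int m - int n\<bar>" "real n + real k" "1 + real m + real k"]
      by (simp add: add.assoc)
    show "(1 + real_of_int \<bar>int m - int n\<bar>)^p * cmod (f (int m - int n)) \<le> C1" using C1 by blast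
    show "(1 + real n + real k)^(p+2) * cmod (g' n k) \<le> C2" using C2 by blast
  qed auto
  then show "\<exists>C. \<forall>m k n. (1 + real m + real k)^p * cmod (f (int m - int n) * g' n k) \<le> C * (1 / (1 + real n)^2)"
    by blast
qed

lemma T3_rapid:
  assumes f': "rapid_seq f'" and g: "rapid_mat g"
  shows "\<And>p. \<exists>C. \<forall>m k n. (1 + real m + real k)^p * cmod (g m n * f' (int n - int k)) \<le> C * (1 / (1 + real n)^2)"
proof -
  fix p
  obtain C1 where C1: "\<forall>z. (1 + real_of_int \<bar>z\<bar>)^p * cmod (f' z) \<le> C1" using rapid_seqD[OF f'] by blast
  obtain C2 where C2: "\<forall>j k. (1 + real j + real k)^(p+2) * cmod (g j k) \<le> C2" using rapid_matD[OF g] by blast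
  have "(1 + real m + real k)^p * cmod (f' (int n - int k) * g m n) \<le> (C1 * C2) * (1 / (1 + real n)^2)" for m k n
  proof (rule prodbound[where A="1 + real_of_int \<bar>int n - int k\<bar>" and B="1 + real m + real n"])
    show "1 + real m + real k \<le> (1 + real_of_int \<bar>int n - int k\<bar>) * (1 + real m + real n)"
      using wgt[of "real_of_int \<bar>int n - int k\<bar>" "real m + real n" "1 + real m + real k"]
      by (simp add: add.assoc)
    show "(1 + real_of_int \<bar>int n - int k\<bar>)^p * cmod (f' (int n - int k)) \<le> C1" using C1 by blast
    show "(1 + real m + real n)^(p+2) * cmod (g m n) \<le> C2" using C2 by blast
  qed auto
  then show "\<exists>C. \<forall>m k n. (1 + real m + real k)^p * cmod (g m n * f' (int n - int k)) \<le> C * (1 / (1 + real n)^2)"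
    by (auto simp: mult.commute)
qed

lemma T4_rapid:
  assumes g: "rapid_mat g" and g': "rapid_mat g'"
  shows "\<And>p. \<exists>C. \<forall>m k n. (1 + real m + real k)^p * cmod (g m n * g' n k) \<le> C * (1 / (1 + real n)^2)"
proof -
  fix p
  obtain C1 where C1: "\<forall>j k. (1 + real j + real k)^p * cmod (g j k) \<le> C1" using rapid_matD[OF g] by blast
  obtain C2 where C2: "\<forall>j k. (1 + real j + real k)^(p+2) * cmod (g' j k) \<le> C2" using rapid_matD[OF g'] by blast
  have "(1 + real m + real k)^p * cmod (g m n * g' n k) \<le> (C1 * C2) * (1 / (1 + real n)^2)" for m k n
  proof (rule prodbound[where A="1 + real m + real n" and B="1 + real n + real k"])
    show "1 + real m + real k \<le> (1 + real m + real n) * (1 + real n + real k)"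
      using wgt[of "real m + real n" "real n + real k" "1 + real m + real k"]
      by (simp add: add.assoc)
    show "(1 + real m + real n)^p * cmod (g m n) \<le> C1" using C1 by blast
    show "(1 + real n + real k)^(p+2) * cmod (g' n k) \<le> C2" using C2 by blast
  qed auto
  then show "\<exists>C. \<forall>m k n. (1 + real m + real k)^p * cmod (g m n * g' n k) \<le> C * (1 / (1 + real n)^2)"
    by blast
qed

definition Fc :: "(int \<Rightarrow> complex) \<Rightarrow> (int \<Rightarrow> complex) \<Rightarrow> int \<Rightarrow> complex" where
  "Fc f f' z = infsum (\<lambda>i. f (z - i) * f' i) UNIV"

definition G1 :: "(int \<Rightarrow> complex) \<Rightarrow> (int \<Rightarrow> complex) \<Rightarrow> nat \<Rightarrow> nat \<Rightarrow> complex" where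
  "G1 f f' m k = infsum (\<lambda>j. f (int m - j) * f' (j - int k)) {..<0}"

lemma Fc_bound:
  assumes f: "rapid_seq f" and f': "rapid_seq f'"
  shows "\<exists>C. \<forall>z i. (1 + real_of_int \<bar>z\<bar>)^p * cmod (f (z - i) * f' i) \<le> C * wz i"
proof -
  obtain C1 where C1: "\<forall>z. (1 + real_of_int \<bar>z\<bar>)^p * cmod (f z) \<le> C1" using rapid_seqD[OF f] by blast
  obtain C2 where C2: "\<forall>z. (1 + real_of_int \<bar>z\<bar>)^(p+2) * cmod (f' z) \<le> C2" using rapid_seqD[OF f'] by blast
  have "(1 + real_of_int \<bar>z\<bar>)^p * cmod (f (z - i) * f' i) \<le> (C1 * C2) * wz i" for z i
    unfolding wz_def
  proof (rule prodbound[where A="1 + real_of_int \<bar>z - i\<bar>" and B="1 + real_of_int \<bar>i\<bar>"])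
    show "1 + real_of_int \<bar>z\<bar> \<le> (1 + real_of_int \<bar>z - i\<bar>) * (1 + real_of_int \<bar>i\<bar>)"
      by (rule wgt) auto
    show "(1 + real_of_int \<bar>z - i\<bar>)^p * cmod (f (z - i)) \<le> C1" using C1 by blast
    show "(1 + real_of_int \<bar>i\<bar>)^(p+2) * cmod (f' i) \<le> C2" using C2 by blast
  qed auto
  then show ?thesis by blast
qed

lemma Fc_rapid:
  assumes f: "rapid_seq f" and f': "rapid_seq f'"
  shows "\<And>z. (\<lambda>i. f (z - i) * f' i) summable_on UNIV" "rapid_seq (Fc f f')"
proof -
  fix z
  obtain C where C: "\<forall>z i. (1 + real_of_int \<bar>z\<bar>)^0 * cmod (f (z - i) * f' i) \<le> C * wz i"
    using Fc_bound[OF f f'] by blast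
  show "(\<lambda>i. f (z - i) * f' i) summable_on UNIV"
    by (rule cbound(1)[OF wz_summable]) (use C wz_pos in auto)
next
  show "rapid_seq (Fc f f')" unfolding rapid_seq_def
  proof
    fix p
    obtain C where C: "\<forall>z i. (1 + real_of_int \<bar>z\<bar>)^p * cmod (f (z - i) * f' i) \<le> C * wz i"
      using Fc_bound[OF f f'] by blast
    have "(1 + real_of_int \<bar>z\<bar>)^p * cmod (Fc f f' z) \<le> C * infsum wz UNIV" for z
      unfolding Fc_def by (rule cbound_w[OF wz_summable]) (use C wz_pos in auto)
    then show "\<exists>C. \<forall>z. (1 + real_of_int \<bar>z\<bar>)^p * cmod (Fc f f' z) \<le> C" by blast
  qed
qed

lemma G1_bound:
  assumes f: "rapid_seq f" and f': "rapid_seq f'"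
  shows "\<exists>C. \<forall>m k j. j < 0 \<longrightarrow> (1 + real m + real k)^p * cmod (f (int m - j) * f' (j - int k)) \<le> C * wz j"
proof -
  obtain C1 where C1: "\<forall>z. (1 + real_of_int \<bar>z\<bar>)^p * cmod (f z) \<le> C1" using rapid_seqD[OF f] by blast
  obtain C2 where C2: "\<forall>z. (1 + real_of_int \<bar>z\<bar>)^(p+2) * cmod (f' z) \<le> C2" using rapid_seqD[OF f'] by blast
  have "(1 + real m + real k)^p * cmod (f (int m - j) * f' (j - int k)) \<le> (C1 * C2) * wz j" if j: "j < 0" for m k j
    unfolding wz_def
  proof (rule prodbound[where A="1 + real_of_int \<bar>int m - j\<bar>" and B="1 + real_of_int \<bar>j - int k\<bar>"])
    show "1 + real m + real k \<le> (1 + real_of_int \<bar>int m - j\<bar>) * (1 + real_of_int \<bar>j - int k\<bar>)"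
      by (rule wgt) (use j in auto)
    show "(1 + real_of_int \<bar>int m - j\<bar>)^p * cmod (f (int m - j)) \<le> C1" using C1 by blast
    show "(1 + real_of_int \<bar>j - int k\<bar>)^(p+2) * cmod (f' (j - int k)) \<le> C2" using C2 by blast
    show "1 + real_of_int \<bar>j\<bar> \<le> 1 + real_of_int \<bar>j - int k\<bar>" using j by simp
  qed auto
  then show ?thesis by blast
qed

lemma G1_rapid:
  assumes f: "rapid_seq f" and f': "rapid_seq f'"
  shows "\<And>m k. (\<lambda>j. f (int m - j) * f' (j - int k)) summable_on {..<0}" "rapid_mat (G1 f f')"
proof -
  have ws: "wz summable_on {..<0}" by (rule summable_on_subset[OF wz_summable]) simp
  fix m k
  obtain C where C: "\<forall>m k j. j < 0 \<longrightarrow> (1 + real m + real k)^0 * cmod (f (int m - j) * f' (j - int k)) \<le> C * wz j"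
    using G1_bound[OF f f'] by blast
  show "(\<lambda>j. f (int m - j) * f' (j - int k)) summable_on {..<0}"
    by (rule cbound(1)[OF ws]) (use C wz_pos in auto)
next
  have ws: "wz summable_on {..<0}" by (rule summable_on_subset[OF wz_summable]) simp
  show "rapid_mat (G1 f f')" unfolding rapid_mat_def
  proof
    fix p
    obtain C where C: "\<forall>m k j. j < 0 \<longrightarrow> (1 + real m + real k)^p * cmod (f (int m - j) * f' (j - int k)) \<le> C * wz j"
      using G1_bound[OF f f'] by blast
    have "(1 + real m + real k)^p * cmod (G1 f f' m k) \<le> C * infsum wz {..<0}" for m k
      unfolding G1_def by (rule cbound_w[OF ws]) (use C wz_pos in auto)
    then show "\<exists>C. \<forall>m k. (1 + real m + real k)^p * cmod (G1 f f' m k) \<le> C" by blast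
  qed
qed

lemma T1_eq:
  assumes f: "rapid_seq f" and f': "rapid_seq f'"
  shows "(\<lambda>n. f (int m - int n) * f' (int n - int k)) summable_on UNIV"
        "infsum (\<lambda>n. f (int m - int n) * f' (int n - int k)) UNIV = Fc f f' (int m - int k) - G1 f f' m k"
proof -
  define \<phi> where "\<phi> j = f (int m - j) * f' (j - int k)" for j
  define \<psi> where "\<psi> i = f ((int m - int k) - i) * f' i" for i
  have psum: "\<psi> summable_on UNIV" unfolding \<psi>_def by (rule Fc_rapid(1)[OF f f'])
  have ps: "\<psi> summable_on UNIV \<longleftrightarrow> \<phi> summable_on UNIV"
    by (rule summable_on_reindex_bij_witness[where j="\<lambda>i. i + int k" and i="\<lambda>j. j - int k"])
       (auto simp: \<phi>_def \<psi>_def algebra_simps)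
  have pi: "infsum \<psi> UNIV = infsum \<phi> UNIV"
    by (rule infsum_reindex_bij_witness[where j="\<lambda>i. i + int k" and i="\<lambda>j. j - int k"])
       (auto simp: \<phi>_def \<psi>_def algebra_simps)
  have phis: "\<phi> summable_on UNIV" using ps psum by simp
  have s0: "\<phi> summable_on {0..}" by (rule summable_on_subset[OF phis]) simp
  have s1: "\<phi> summable_on {..<0}" unfolding \<phi>_def by (rule G1_rapid(1)[OF f f'])
  have U: "UNIV = {0::int..} \<union> {..<0}" by auto
  have split: "infsum \<phi> UNIV = infsum \<phi> {0..} + infsum \<phi> {..<0}"
    by (subst U, rule infsum_Un_disjoint[OF s0 s1]) auto
  have nat_s: "(\<lambda>n. f (int m - int n) * f' (int n - int k)) summable_on UNIV \<longleftrightarrow> \<phi> summable_on {0..}"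
    by (rule summable_on_reindex_bij_witness[where j="int" and i="nat"]) (auto simp: \<phi>_def)
  have nat_i: "infsum (\<lambda>n. f (int m - int n) * f' (int n - int k)) UNIV = infsum \<phi> {0..}"
    by (rule infsum_reindex_bij_witness[where j="int" and i="nat"]) (auto simp: \<phi>_def)
  show "(\<lambda>n. f (int m - int n) * f' (int n - int k)) summable_on UNIV" using nat_s s0 by simp
  have "Fc f f' (int m - int k) = infsum \<psi> UNIV" unfolding Fc_def \<psi>_def ..
  moreover have "G1 f f' m k = infsum \<phi> {..<0}" unfolding G1_def \<phi>_def ..
  ultimately show "infsum (\<lambda>n. f (int m - int n) * f' (int n - int k)) UNIV = Fc f f' (int m - int k) - G1 f f' m k"
    using nat_i split pi by simp
qed

lemma rapid_mat_add: "rapid_mat g \<Longrightarrow> rapid_mat g' \<Longrightarrow> rapid_mat (\<lambda>m k. g m k + g' m k)"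
  unfolding rapid_mat_def
proof (intro allI)
  fix p assume g: "\<forall>p. \<exists>C. \<forall>j k. (1 + real j + real k) ^ p * cmod (g j k) \<le> C"
    and g': "\<forall>p. \<exists>C. \<forall>j k. (1 + real j + real k) ^ p * cmod (g' j k) \<le> C"
  obtain C1 where C1: "\<forall>j k. (1 + real j + real k) ^ p * cmod (g j k) \<le> C1" using g by blast
  obtain C2 where C2: "\<forall>j k. (1 + real j + real k) ^ p * cmod (g' j k) \<le> C2" using g' by blast
  have "(1 + real j + real k) ^ p * cmod (g j k + g' j k) \<le> C1 + C2" for j k
  proof -
    have "(1 + real j + real k) ^ p * cmod (g j k + g' j k) \<le> (1 + real j + real k) ^ p * (cmod (g j k) + cmod (g' j k))"
      by (rule mult_left_mono[OF norm_triangle_ineq]) simp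
    also have "\<dots> \<le> C1 + C2" using C1 C2 by (simp add: distrib_left add_mono)
    finally show ?thesis .
  qed
  then show "\<exists>C. \<forall>j k. (1 + real j + real k) ^ p * cmod (g j k + g' j k) \<le> C" by blast
qed

lemma rapid_mat_cmult: "rapid_mat g \<Longrightarrow> rapid_mat (\<lambda>m k. c * g m k)"
  unfolding rapid_mat_def
proof (intro allI)
  fix p assume g: "\<forall>p. \<exists>C. \<forall>j k. (1 + real j + real k) ^ p * cmod (g j k) \<le> C"
  obtain C1 where C1: "\<forall>j k. (1 + real j + real k) ^ p * cmod (g j k) \<le> C1" using g by blast
  have "(1 + real j + real k) ^ p * cmod (c * g j k) \<le> cmod c * C1" for j k
    using mult_left_mono[OF C1[rule_format, of j k] norm_ge_zero[of c]] by (simp add: norm_mult mult_ac)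
  then show "\<exists>C. \<forall>j k. (1 + real j + real k) ^ p * cmod (c * g j k) \<le> C" by blast
qed

lemma rapid_seq_add: "rapid_seq g \<Longrightarrow> rapid_seq g' \<Longrightarrow> rapid_seq (\<lambda>z. g z + g' z)"
  unfolding rapid_seq_def
proof (intro allI)
  fix p assume g: "\<forall>p. \<exists>C. \<forall>z. (1 + real_of_int \<bar>z\<bar>) ^ p * cmod (g z) \<le> C"
    and g': "\<forall>p. \<exists>C. \<forall>z. (1 + real_of_int \<bar>z\<bar>) ^ p * cmod (g' z) \<le> C"
  obtain C1 where C1: "\<forall>z. (1 + real_of_int \<bar>z\<bar>) ^ p * cmod (g z) \<le> C1" using g by blast
  obtain C2 where C2: "\<forall>z. (1 + real_of_int \<bar>z\<bar>) ^ p * cmod (g' z) \<le> C2" using g' by blast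
  have "(1 + real_of_int \<bar>z\<bar>) ^ p * cmod (g z + g' z) \<le> C1 + C2" for z
  proof -
    have "(1 + real_of_int \<bar>z\<bar>) ^ p * cmod (g z + g' z) \<le> (1 + real_of_int \<bar>z\<bar>) ^ p * (cmod (g z) + cmod (g' z))"
      by (rule mult_left_mono[OF norm_triangle_ineq]) simp
    also have "\<dots> \<le> C1 + C2" using C1 C2 by (simp add: distrib_left add_mono)
    finally show ?thesis .
  qed
  then show "\<exists>C. \<forall>z. (1 + real_of_int \<bar>z\<bar>) ^ p * cmod (g z + g' z) \<le> C" by blast
qed

lemma rapid_seq_cmult: "rapid_seq g \<Longrightarrow> rapid_seq (\<lambda>z. c * g z)"
  unfolding rapid_seq_def
proof (intro allI)
  fix p assume g: "\<forall>p. \<exists>C. \<forall>z. (1 + real_of_int \<bar>z\<bar>) ^ p * cmod (g z) \<le> C"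
  obtain C1 where C1: "\<forall>z. (1 + real_of_int \<bar>z\<bar>) ^ p * cmod (g z) \<le> C1" using g by blast
  have "(1 + real_of_int \<bar>z\<bar>) ^ p * cmod (c * g z) \<le> cmod c * C1" for z
    using mult_left_mono[OF C1[rule_format, of z] norm_ge_zero[of c]] by (simp add: norm_mult mult_ac)
  then show "\<exists>C. \<forall>z. (1 + real_of_int \<bar>z\<bar>) ^ p * cmod (c * g z) \<le> C" by blast
qed

lemma rapid_seq_adj: "rapid_seq g \<Longrightarrow> rapid_seq (\<lambda>z. cnj (g (- z)))"
  unfolding rapid_seq_def
proof (intro allI)
  fix p assume g: "\<forall>p. \<exists>C. \<forall>z. (1 + real_of_int \<bar>z\<bar>) ^ p * cmod (g z) \<le> C"
  obtain C1 where C1: "\<forall>z. (1 + real_of_int \<bar>z\<bar>) ^ p * cmod (g z) \<le> C1" using g by blast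
  have "(1 + real_of_int \<bar>z\<bar>) ^ p * cmod (cnj (g (- z))) \<le> C1" for z
    using C1[rule_format, of "- z"] by simp
  then show "\<exists>C. \<forall>z. (1 + real_of_int \<bar>z\<bar>) ^ p * cmod (cnj (g (- z))) \<le> C" by blast
qed

lemma rapid_mat_adj: "rapid_mat g \<Longrightarrow> rapid_mat (\<lambda>m k. cnj (g k m))"
  unfolding rapid_mat_def
proof (intro allI)
  fix p assume g: "\<forall>p. \<exists>C. \<forall>j k. (1 + real j + real k) ^ p * cmod (g j k) \<le> C"
  obtain C1 where C1: "\<forall>j k. (1 + real j + real k) ^ p * cmod (g j k) \<le> C1" using g by blast
  have "(1 + real j + real k) ^ p * cmod (cnj (g k j)) \<le> C1" for j k
    using C1[rule_format, of k j] by (simp add: add_ac)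
  then show "\<exists>C. \<forall>j k. (1 + real j + real k) ^ p * cmod (cnj (g k j)) \<le> C" by blast
qed

lemma prod_toep:
  assumes f: "rapid_seq f" and g: "rapid_mat g" and f': "rapid_seq f'" and g': "rapid_mat g'"
  shows "\<exists>F G. rapid_seq F \<and> rapid_mat G \<and> (\<forall>m k.
     (\<lambda>n. toep f g m n * toep f' g' n k) summable_on UNIV \<and>
     infsum (\<lambda>n. toep f g m n * toep f' g' n k) UNIV = toep F G m k)"
proof -
  define X2 where "X2 m k n = f (int m - int n) * g' n k" for m k n
  define X3 where "X3 m k n = g m n * f' (int n - int k)" for m k n
  define X4 where "X4 m k n = g m n * g' n k" for m k n
  have s2: "\<And>m k. X2 m k summable_on UNIV" and r2: "rapid_mat (\<lambda>m k. infsum (X2 m k) UNIV)"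
    using natsum_rapid[of X2] T2_rapid[OF f g'] unfolding X2_def by blast+
  have s3: "\<And>m k. X3 m k summable_on UNIV" and r3: "rapid_mat (\<lambda>m k. infsum (X3 m k) UNIV)"
    using natsum_rapid[of X3] T3_rapid[OF f' g] unfolding X3_def by blast+
  have s4: "\<And>m k. X4 m k summable_on UNIV" and r4: "rapid_mat (\<lambda>m k. infsum (X4 m k) UNIV)"
    using natsum_rapid[of X4] T4_rapid[OF g g'] unfolding X4_def by blast+
  define G where "G m k = (- 1) * G1 f f' m k + (infsum (X2 m k) UNIV + (infsum (X3 m k) UNIV + infsum (X4 m k) UNIV))" for m k
  have rG: "rapid_mat G" unfolding G_def
    by (intro rapid_mat_add rapid_mat_cmult G1_rapid(2)[OF f f'] r2 r3 r4)
  have "(\<lambda>n. toep f g m n * toep f' g' n k) summable_on UNIV \<and>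
     infsum (\<lambda>n. toep f g m n * toep f' g' n k) UNIV = toep (Fc f f') G m k" for m k
  proof -
    define X1 where "X1 n = f (int m - int n) * f' (int n - int k)" for n
    have s1: "X1 summable_on UNIV" and i1: "infsum X1 UNIV = Fc f f' (int m - int k) - G1 f f' m k"
      unfolding X1_def using T1_eq[OF f f'] by blast+
    have e: "(\<lambda>n. toep f g m n * toep f' g' n k) = (\<lambda>n. X1 n + (X2 m k n + (X3 m k n + X4 m k n)))"
      by (simp add: fun_eq_iff toep_def X1_def X2_def X3_def X4_def algebra_simps)
    have s234: "(\<lambda>n. X3 m k n + X4 m k n) summable_on UNIV" using s3 s4 by (rule summable_on_add)
    have s2_4: "(\<lambda>n. X2 m k n + (X3 m k n + X4 m k n)) summable_on UNIV" using s2 s234 by (rule summable_on_add)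
    have "infsum (\<lambda>n. X1 n + (X2 m k n + (X3 m k n + X4 m k n))) UNIV
       = infsum X1 UNIV + (infsum (X2 m k) UNIV + (infsum (X3 m k) UNIV + infsum (X4 m k) UNIV))"
      by (simp add: infsum_add s1 s2 s3 s4 s234 s2_4)
    then show ?thesis unfolding e using s1 s2_4 i1
      by (auto simp: toep_def G_def intro: summable_on_add)
  qed
  then show ?thesis using Fc_rapid(2)[OF f f'] rG by blast
qed

context orb
begin

lemma orbit_range: "root b = r \<Longrightarrow> b \<in> range (\<lambda>n. (\<sigma>^^n) r)"
proof -
  assume "root b = r"
  then have "b = (\<sigma>^^ht b) r" using decomp[of b] by simp
  then show ?thesis by (rule image_eqI) simp
qed

lemma mult_Om:
  assumes f: "rapid_seq f" and g: "rapid_mat g" and f': "rapid_seq f'" and g': "rapid_mat g'"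
  shows "\<exists>F G. rapid_seq F \<and> rapid_mat G \<and> mult_op (Om (toep f g)) (Om (toep f' g')) = Om (toep F G)"
proof -
  obtain F G where FG: "rapid_seq F" "rapid_mat G"
    and P: "\<And>m k. infsum (\<lambda>n. toep f g m n * toep f' g' n k) UNIV = toep F G m k"
    using prod_toep[OF f g f' g'] by blast
  have "mult_op (Om (toep f g)) (Om (toep f' g')) a c = Om (toep F G) a c" for a c
  proof (cases "root a = root c")
    case False
    have "(\<lambda>b. Om (toep f g) a b * Om (toep f' g') b c) = (\<lambda>b. 0)"
      using False by (auto simp: fun_eq_iff Om_def)
    then show ?thesis using False unfolding mult_op_def by (simp add: Om_def)
  next
    case True
    define r where "r = root a"
    have r: "r \<notin> range \<sigma>" unfolding r_def by (rule root_nr)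
    have ra: "root a = r" and rc: "root c = r" using True unfolding r_def by auto
    have inj: "inj_on (\<lambda>n. (\<sigma>^^n) r) UNIV"
      unfolding inj_on_def using ht_pow[OF r] by metis
    have "infsum (\<lambda>b. Om (toep f g) a b * Om (toep f' g') b c) UNIV
        = infsum (\<lambda>b. Om (toep f g) a b * Om (toep f' g') b c) (range (\<lambda>n. (\<sigma>^^n) r))"
    proof (rule infsum_cong_neutral)
      fix b assume "b \<in> UNIV - range (\<lambda>n. (\<sigma>^^n) r)"
      then have "root b \<noteq> r" using orbit_range by blast
      then show "Om (toep f g) a b * Om (toep f' g') b c = 0" by (simp add: Om_def ra)
    qed auto
    also have "\<dots> = infsum ((\<lambda>b. Om (toep f g) a b * Om (toep f' g') b c) \<circ> (\<lambda>n. (\<sigma>^^n) r)) UNIV"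
      by (rule infsum_reindex[OF inj])
    also have "\<dots> = infsum (\<lambda>n. toep f g (ht a) n * toep f' g' n (ht c)) UNIV"
      by (rule infsum_cong) (simp add: Om_def root_pow[OF r] ht_pow[OF r] ra rc)
    also have "\<dots> = toep F G (ht a) (ht c)" by (rule P)
    finally show ?thesis unfolding mult_op_def using True by (simp add: Om_def)
  qed
  then show ?thesis using FG by (auto simp: fun_eq_iff)
qed

lemma adj_Om: "adj_op (Om (toep f g)) = Om (toep (\<lambda>z. cnj (f (- z))) (\<lambda>m k. cnj (g k m)))"
  by (auto simp: fun_eq_iff adj_op_def Om_def toep_def)

lemma add_Om: "(\<lambda>i j. Om (toep f g) i j + Om (toep f' g') i j) = Om (toep (\<lambda>z. f z + f' z) (\<lambda>m k. g m k + g' m k))"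
  by (auto simp: fun_eq_iff Om_def toep_def)

lemma smult_Om: "(\<lambda>i j. c * Om (toep f g) i j) = Om (toep (\<lambda>z. c * f z) (\<lambda>m k. c * g m k))"
  by (auto simp: fun_eq_iff Om_def toep_def algebra_simps)

lemma id_Om: "id_op = Om (toep (\<lambda>z. if z = 0 then 1 else 0) (\<lambda>m k. 0))"
proof -
  have "id_op a b = Om (toep (\<lambda>z. if z = 0 then 1 else 0) (\<lambda>m k. 0)) a b" for a b
    using same[of a b] by (auto simp: id_op_def Om_def toep_def)
  then show ?thesis by (auto simp: fun_eq_iff)
qed

lemma rapid_delta: "rapid_seq (\<lambda>z. if z = 0 then 1 else 0)"
  unfolding rapid_seq_def by (intro allI exI[of _ 1]) auto

lemma rapid_zero: "rapid_mat (\<lambda>m k. 0)"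
  unfolding rapid_mat_def by auto

lemma algebra: "unital_star_algebra (A_infty \<sigma>)"
  unfolding unital_star_algebra_def
proof (intro conjI ballI allI)
  fix a assume "a \<in> A_infty \<sigma>"
  then obtain f g where fg: "rapid_seq f" "rapid_mat g" "a = Om (toep f g)" using A_mem by blast
  have "bounded_op (Om (\<lambda>m n. (of_int (int m - int n))^0 * toep f g m n))"
    by (rule toep_bounded_pow[OF fg(1,2)])
  then show "bounded_op a" using fg(3) by simp
next
  show "id_op \<in> A_infty \<sigma>" unfolding A_mem using id_Om rapid_delta rapid_zero by blast
next
  fix a b assume "a \<in> A_infty \<sigma>" "b \<in> A_infty \<sigma>"
  then obtain f g f' g' where fg: "rapid_seq f" "rapid_mat g" "a = Om (toep f g)"
    and fg': "rapid_seq f'" "rapid_mat g'" "b = Om (toep f' g')" using A_mem by meson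
  show "(\<lambda>i j. a i j + b i j) \<in> A_infty \<sigma>" unfolding A_mem fg(3) fg'(3) add_Om
    using rapid_seq_add[OF fg(1) fg'(1)] rapid_mat_add[OF fg(2) fg'(2)] by blast
  show "mult_op a b \<in> A_infty \<sigma>" unfolding A_mem fg(3) fg'(3)
    using mult_Om[OF fg(1,2) fg'(1,2)] by blast
next
  fix a c assume "a \<in> A_infty \<sigma>"
  then obtain f g where fg: "rapid_seq f" "rapid_mat g" "a = Om (toep f g)" using A_mem by blast
  show "(\<lambda>i j. c * a i j) \<in> A_infty \<sigma>" unfolding A_mem fg(3) smult_Om
    using rapid_seq_cmult[OF fg(1)] rapid_mat_cmult[OF fg(2)] by blast
next
  fix a assume "a \<in> A_infty \<sigma>"
  then obtain f g where fg: "rapid_seq f" "rapid_mat g" "a = Om (toep f g)" using A_mem by blast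
  show "adj_op a \<in> A_infty \<sigma>" unfolding A_mem fg(3) adj_Om
    using rapid_seq_adj[OF fg(1)] rapid_mat_adj[OF fg(2)] by blast
qed

end

locale orbd = orb +
  fixes d :: "'a \<Rightarrow> real"
  assumes d_eq: "d x = d (root x) + real (ht x)" and d_nn: "0 \<le> d x"
begin

lemma delta_pow: "(delta_op d ^^ k) T = (\<lambda>a b. (complex_of_real (\<bar>d a\<bar> - \<bar>d b\<bar>))^k * T a b)"
  by (induction k) (auto simp: delta_op_def fun_eq_iff)

lemma Om_pow: "(\<lambda>a b. (complex_of_real (\<bar>d a\<bar> - \<bar>d b\<bar>))^k * (complex_of_real (d a - d b))^e * Om K a b)
   = Om (\<lambda>m n. (of_int (int m - int n))^(k + e) * K m n)"
proof -
  have "(complex_of_real (\<bar>d a\<bar> - \<bar>d b\<bar>))^k * (complex_of_real (d a - d b))^e * Om K a b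
      = Om (\<lambda>m n. (of_int (int m - int n))^(k + e) * K m n) a b" for a b
  proof (cases "root a = root b")
    case True
    have "\<bar>d a\<bar> - \<bar>d b\<bar> = real (ht a) - real (ht b)" using d_nn d_eq[of a] d_eq[of b] True by simp
    moreover have "d a - d b = real (ht a) - real (ht b)" using d_eq[of a] d_eq[of b] True by simp
    ultimately show ?thesis using True by (simp add: Om_def power_add)
  qed (simp add: Om_def)
  then show ?thesis by (auto simp: fun_eq_iff)
qed

theorem regular:
  assumes cr: "compact_resolvent d"
  shows "regular_spectral_triple (A_infty \<sigma>) d"
  unfolding regular_spectral_triple_def spectral_triple_def
proof (intro conjI ballI algebra cr)
  fix a assume "a \<in> A_infty \<sigma>"
  then obtain f g where fg: "rapid_seq f" "rapid_mat g" "a = Om (toep f g)" using A_mem by blast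
  have b: "bounded_op (\<lambda>a b. (complex_of_real (\<bar>d a\<bar> - \<bar>d b\<bar>))^k * (complex_of_real (d a - d b))^e * Om (toep f g) a b)" for k e
    unfolding Om_pow by (rule toep_bounded_pow[OF fg(1,2)])
  show "bounded_op (comm_op d a)"
    using b[of 0 1] unfolding fg(3) comm_op_def by simp
  show "smooth_op d a" unfolding smooth_op_def delta_pow
    using b[of _ 0] unfolding fg(3) by simp
  show "smooth_op d (comm_op d a)" unfolding smooth_op_def delta_pow
    using b[of _ 1] unfolding fg(3) comm_op_def by (simp add: mult.assoc)
qed

end

lemma diag_norm_le:
  assumes "\<And>i. cmod (D i) \<le> R" "0 \<le> R"
  shows "norm_le (\<lambda>i j. if i = j then D i else 0) R"
proof (rule schur)
  fix S :: "'a set" and i assume S: "finite S"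
  have "(\<Sum>j\<in>S. cmod (if i = j then D i else 0)) = (\<Sum>j\<in>S. if i = j then cmod (D i) else 0)"
    by (intro sum.cong) auto
  also have "\<dots> = (if i \<in> S then cmod (D i) else 0)" using S by simp
  also have "\<dots> \<le> R" using assms by auto
  finally show "(\<Sum>j\<in>S. cmod (if i = j then D i else 0)) \<le> R" .
next
  fix S :: "'a set" and j assume S: "finite S"
  have "(\<Sum>i\<in>S. cmod (if i = j then D i else 0)) = (\<Sum>i\<in>S. if j = i then cmod (D j) else 0)"
    by (intro sum.cong) auto
  also have "\<dots> = (if j \<in> S then cmod (D j) else 0)" using S by simp
  also have "\<dots> \<le> R" using assms by auto
  finally show "(\<Sum>i\<in>S. cmod (if i = j then D i else 0)) \<le> R" .
qed

lemma cmod_res: "1 \<le> cmod (complex_of_real t - \<i>)" "\<bar>t\<bar> \<le> cmod (complex_of_real t - \<i>)"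
  using abs_Im_le_cmod[of "complex_of_real t - \<i>"] abs_Re_le_cmod[of "complex_of_real t - \<i>"] by auto

lemma res_le1: "cmod (1 / (complex_of_real t - \<i>)) \<le> 1"
proof -
  have c: "1 \<le> cmod (complex_of_real t - \<i>)" by (rule cmod_res(1))
  have "1 / cmod (complex_of_real t - \<i>) \<le> 1"
    using c by (subst divide_le_eq_1) auto
  then show ?thesis by (simp add: norm_divide)
qed

lemma res_le_eps:
  assumes "0 < e" "1 / e < t"
  shows "cmod (1 / (complex_of_real t - \<i>)) \<le> e"
proof -
  have t0: "0 < t" using assms by (smt (verit) divide_pos_pos)
  have "1 / e < cmod (complex_of_real t - \<i>)" using cmod_res(2)[of t] assms t0 by linarith
  then have "1 < e * cmod (complex_of_real t - \<i>)" using assms(1) by (simp add: field_simps)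
  moreover have c: "0 < cmod (complex_of_real t - \<i>)" using cmod_res(1)[of t] by linarith
  ultimately have "1 / cmod (complex_of_real t - \<i>) \<le> e"
    by (subst divide_le_eq) (auto simp: mult.commute)
  then show ?thesis by (simp add: norm_divide)
qed

lemma compact_res:
  fixes d :: "'i \<Rightarrow> real"
  assumes fin: "\<And>R. finite {x. d x \<le> R}"
  shows "compact_resolvent d"
  unfolding compact_resolvent_def compact_op_def
proof (intro conjI allI impI)
  define D where "D i = 1 / (complex_of_real (d i) - \<i>)" for i
  show "bounded_op (\<lambda>i j. if i = j then 1 / (complex_of_real (d i) - \<i>) else 0)"
    unfolding bounded_op_def by (intro exI[of _ 1] diag_norm_le res_le1) simp
  fix e :: real assume e: "0 < e"
  define T where "T = {x. d x \<le> 1 / e}"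
  have T: "finite T" unfolding T_def by (rule fin)
  obtain n :: nat and h where h: "T = h ` {i. i < n}" "inj_on h {i. i < n}"
    using finite_imp_nat_seg_image_inj_on[OF T] by blast
  define K where "K i j = (if i = j \<and> i \<in> T then D i else 0)" for i j
  define u where "u r = (\<lambda>i. if i = h r then D i else 0)" for r
  define v where "v r = (\<lambda>i. if i = h r then 1 else (0::complex))" for r
  have fr: "finite_rank K" unfolding finite_rank_def
  proof (intro exI conjI allI impI)
    fix r :: nat
    show "l2vec (u r)" unfolding l2vec_def
      by (rule finite_nonzero_values_imp_summable_on) (auto simp: u_def)
    show "l2vec (v r)" unfolding l2vec_def
      by (rule finite_nonzero_values_imp_summable_on) (auto simp: v_def)
  next
    fix i j
    have "(\<Sum>r<n. u r i * cnj (v r j)) = (\<Sum>r\<in>{i. i < n}. (\<lambda>t. if t = i then (if i = j then D i else 0) else 0) (h r))"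
      by (intro sum.cong) (auto simp: u_def v_def)
    also have "\<dots> = (\<Sum>t\<in>T. if t = i then (if i = j then D i else 0) else 0)"
      unfolding h(1) by (simp add: sum.reindex[OF h(2)] o_def)
    also have "\<dots> = K i j" using T by (simp add: K_def)
    finally show "K i j = (\<Sum>r<n. u r i * cnj (v r j))" by simp
  qed
  have "norm_le (\<lambda>i j. if i = j then (if i \<in> T then 0 else D i) else 0) e"
  proof (rule diag_norm_le)
    fix i show "cmod (if i \<in> T then 0 else D i) \<le> e"
      using e res_le_eps[OF e, of "d i"] by (auto simp: T_def D_def)
  qed (use e in simp)
  moreover have "(\<lambda>i j. (if i = j then 1 / (complex_of_real (d i) - \<i>) else 0) - K i j)
      = (\<lambda>i j. if i = j then (if i \<in> T then 0 else D i) else 0)"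
    by (auto simp: fun_eq_iff K_def D_def)
  ultimately show "\<exists>K. finite_rank K \<and> norm_le (\<lambda>i j. (if i = j then 1 / (complex_of_real (d i) - \<i>) else 0) - K i j) e"
    using fr by auto
qed

lemma finite_real_le: "finite {n::nat. real n \<le> R}"
proof -
  have "{n::nat. real n \<le> R} \<subseteq> {..nat \<lceil>R\<rceil>}"
  proof
    fix n assume "n \<in> {n::nat. real n \<le> R}"
    then have "real n \<le> R" by simp
    moreover have c: "R \<le> real_of_int \<lceil>R\<rceil>" by (rule le_of_int_ceiling)
    ultimately have "real_of_int (int n) \<le> real_of_int \<lceil>R\<rceil>" unfolding of_int_of_nat_eq by linarith
    then have "int n \<le> \<lceil>R\<rceil>" by (simp only: of_int_le_iff)
    then show "n \<in> {..nat \<lceil>R\<rceil>}" by simp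
  qed
  then show ?thesis by (rule finite_subset) simp
qed

lemma Rep_zplus_ge: "1 \<le> Rep_zplus x" using Rep_zplus[of x] by simp

lemma Rep_shift_zp: "Rep_zplus (shift_zp x) = Rep_zplus x + 1"
  unfolding shift_zp_def by (rule Abs_zplus_inverse) simp

lemma Rep_pow_zp: "Rep_zplus ((shift_zp^^n) (Abs_zplus 1)) = n + 1"
  by (induction n) (auto simp: Rep_shift_zp Abs_zplus_inverse)

lemma zp_orbd: "orbd shift_zp (\<lambda>_. Abs_zplus 1) (\<lambda>x. Rep_zplus x - 1) N_zp"
proof
  show "inj shift_zp" unfolding inj_def
    by (metis Rep_shift_zp Rep_zplus_inject add_right_cancel)
  fix x
  show "Abs_zplus 1 \<notin> range shift_zp"
  proof
    assume "Abs_zplus 1 \<in> range shift_zp"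
    then obtain y where "Abs_zplus 1 = shift_zp y" by blast
    then have "Rep_zplus (Abs_zplus 1) = Rep_zplus y + 1" by (simp add: Rep_shift_zp)
    then show False using Rep_zplus_ge[of y] by (simp add: Abs_zplus_inverse)
  qed
  show "(shift_zp ^^ (Rep_zplus x - 1)) (Abs_zplus 1) = x"
    using Rep_pow_zp[of "Rep_zplus x - 1"] Rep_zplus_ge[of x] by (simp add: Rep_zplus_inject[symmetric])
  show "N_zp x = N_zp (Abs_zplus 1) + real (Rep_zplus x - 1)"
    using Rep_zplus_ge[of x] by (simp add: N_zp_def Abs_zplus_inverse of_nat_diff)
  show "0 \<le> N_zp x" by (simp add: N_zp_def)
qed

lemma zp_finite: "finite {x. N_zp x \<le> R}"
proof -
  have "finite (Rep_zplus ` {x. N_zp x \<le> R})"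
    by (rule finite_subset[OF _ finite_real_le[of R]]) (auto simp: N_zp_def)
  then show ?thesis by (rule finite_imageD) (simp add: inj_on_def Rep_zplus_inject)
qed

theorem zp_regular: "regular_spectral_triple (A_infty shift_zp) N_zp"
  by (rule orbd.regular[OF zp_orbd compact_res[OF zp_finite]])

definition Ph :: "nat \<Rightarrow> nat \<Rightarrow> hidx" where
  "Ph k i = Abs_hidx (real k + 1/2, - (real k + 1/2) + real i)"

definition kk :: "hidx \<Rightarrow> nat" where "kk x = nat \<lfloor>fst (Rep_hidx x)\<rfloor>"
definition ii :: "hidx \<Rightarrow> nat" where "ii x = nat \<lfloor>snd (Rep_hidx x) + fst (Rep_hidx x)\<rfloor>"

lemma Rep_Ph: "i \<le> 2 * k + 1 \<Longrightarrow> Rep_hidx (Ph k i) = (real k + 1/2, - (real k + 1/2) + real i)"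
  unfolding Ph_def
proof (rule Abs_hidx_inverse)
  assume i: "i \<le> 2 * k + 1"
  then have "real i \<le> 2 * real k + 1" by linarith
  then show "(real k + 1/2, - (real k + 1/2) + real i) \<in> {(l, m). (\<exists>k::nat. l = real k + 1/2) \<and>
                   (\<exists>i::nat. m = - l + real i) \<and> m \<le> l}"
    by auto
qed

lemma floor_half: "\<lfloor>real k + 1/2\<rfloor> = int k"
  by (simp add: floor_eq_iff)

lemma kk_Ph: "i \<le> 2 * k + 1 \<Longrightarrow> kk (Ph k i) = k"
  by (simp add: kk_def Rep_Ph floor_half)

lemma ii_Ph: "i \<le> 2 * k + 1 \<Longrightarrow> ii (Ph k i) = i"
  by (simp add: ii_def Rep_Ph)

lemma Ph_surj: "x = Ph (kk x) (ii x) \<and> ii x \<le> 2 * kk x + 1"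
proof -
  obtain l m where lm: "Rep_hidx x = (l, m)" by (cases "Rep_hidx x")
  have "(l, m) \<in> {(l, m). (\<exists>k::nat. l = real k + 1/2) \<and> (\<exists>i::nat. m = - l + real i) \<and> m \<le> l}"
    using Rep_hidx[of x] lm by simp
  then obtain k i where k: "l = real k + 1/2" and i: "m = - l + real i" and ml: "m \<le> l" by auto
  have ile: "i \<le> 2 * k + 1"
  proof -
    have "real i \<le> 2 * real k + 1" using ml k i by linarith
    then show ?thesis by linarith
  qed
  have kx: "kk x = k" by (simp add: kk_def lm k floor_half)
  have ix: "ii x = i" by (simp add: ii_def lm k i)
  have "Rep_hidx (Ph k i) = Rep_hidx x" using Rep_Ph[OF ile] lm k i by simp
  then have "x = Ph k i" using Rep_hidx_inject by metis
  then show ?thesis using kx ix ile by simp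
qed

lemma Ph_eq: "i \<le> 2 * k + 1 \<Longrightarrow> i' \<le> 2 * k' + 1 \<Longrightarrow> Ph k i = Ph k' i' \<longleftrightarrow> k = k' \<and> i = i'"
  by (metis kk_Ph ii_Ph)

lemma shift_Ph: "i \<le> 2 * k + 1 \<Longrightarrow> shift_h (Ph k i) = Ph (k + 1) (i + 2)"
  unfolding shift_h_def by (simp add: Rep_Ph) (simp add: Ph_def algebra_simps)

lemma pow_Ph: "i \<le> 2 * k + 1 \<Longrightarrow> (shift_h^^n) (Ph k i) = Ph (k + n) (i + 2 * n)"
proof (induction n)
  case (Suc n)
  then show ?case using shift_Ph[of "i + 2 * n" "k + n"] by simp
qed simp

lemma absD_Ph: "i \<le> 2 * k + 1 \<Longrightarrow> absD_h (Ph k i) = real k + 1"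
  by (simp add: absD_h_def Rep_Ph)

definition hh :: "hidx \<Rightarrow> nat" where "hh x = min (kk x) (ii x div 2)"
definition rt :: "hidx \<Rightarrow> hidx" where "rt x = Ph (kk x - hh x) (ii x - 2 * hh x)"

lemma rt_valid: "ii x - 2 * hh x \<le> 2 * (kk x - hh x) + 1"
  using Ph_surj[of x] unfolding hh_def by auto

lemma h_orbd: "orbd shift_h rt hh absD_h"
proof
  show "inj shift_h" unfolding inj_def
  proof (intro allI impI)
    fix x y assume e: "shift_h x = shift_h y"
    have vx: "ii x \<le> 2 * kk x + 1" and vy: "ii y \<le> 2 * kk y + 1" using Ph_surj by auto
    have "Ph (kk x + 1) (ii x + 2) = Ph (kk y + 1) (ii y + 2)"
      using e shift_Ph[OF vx] shift_Ph[OF vy] Ph_surj[of x] Ph_surj[of y] by metis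
    then have "kk x = kk y \<and> ii x = ii y" using Ph_eq[of "ii x + 2" "kk x + 1" "ii y + 2" "kk y + 1"] vx vy by simp
    then show "x = y" using Ph_surj[of x] Ph_surj[of y] by metis
  qed
  fix x
  show "rt x \<notin> range shift_h"
  proof
    assume "rt x \<in> range shift_h"
    then obtain y where y: "rt x = shift_h y" by blast
    have vy: "ii y \<le> 2 * kk y + 1" using Ph_surj by auto
    have "Ph (kk x - hh x) (ii x - 2 * hh x) = Ph (kk y + 1) (ii y + 2)"
      using y shift_Ph[OF vy] Ph_surj[of y] unfolding rt_def by metis
    then have "kk x - hh x = kk y + 1 \<and> ii x - 2 * hh x = ii y + 2"
      using Ph_eq[of "ii x - 2 * hh x" "kk x - hh x" "ii y + 2" "kk y + 1"] vy rt_valid[of x] by simp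
    then show False unfolding hh_def by auto
  qed
  show "(shift_h ^^ hh x) (rt x) = x"
  proof -
    have "(shift_h ^^ hh x) (rt x) = Ph (kk x - hh x + hh x) (ii x - 2 * hh x + 2 * hh x)"
      unfolding rt_def by (rule pow_Ph[OF rt_valid])
    also have "\<dots> = Ph (kk x) (ii x)" unfolding hh_def by auto
    also have "\<dots> = x" using Ph_surj[of x] by simp
    finally show ?thesis .
  qed
  show "absD_h x = absD_h (rt x) + real (hh x)"
  proof -
    have "absD_h x = real (kk x) + 1" using absD_Ph Ph_surj[of x] by metis
    moreover have "absD_h (rt x) = real (kk x - hh x) + 1" unfolding rt_def by (rule absD_Ph[OF rt_valid])
    moreover have "hh x \<le> kk x" unfolding hh_def by simp
    ultimately show ?thesis by (simp add: of_nat_diff)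
  qed
  show "0 \<le> absD_h x" using absD_Ph Ph_surj[of x] by (metis of_nat_0_le_iff add_nonneg_nonneg zero_le_one)
qed

lemma h_finite: "finite {x. absD_h x \<le> R}"
proof -
  have "{x. absD_h x \<le> R} \<subseteq> (\<lambda>p. Ph (fst p) (snd p)) ` ({n. real n \<le> R} \<times> {..2 * nat \<lceil>R\<rceil> + 1})"
  proof
    fix x assume "x \<in> {x. absD_h x \<le> R}"
    then have R: "absD_h x \<le> R" by simp
    have v: "ii x \<le> 2 * kk x + 1" and xe: "x = Ph (kk x) (ii x)" using Ph_surj by auto
    have a: "absD_h x = real (kk x) + 1" using absD_Ph v xe by metis
    then have kR: "real (kk x) \<le> R" using R by simp
    have "kk x \<le> nat \<lceil>R\<rceil>"
    proof -
      have c: "R \<le> real_of_int \<lceil>R\<rceil>" by (rule le_of_int_ceiling)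
      have "real_of_int (int (kk x)) \<le> real_of_int \<lceil>R\<rceil>" unfolding of_int_of_nat_eq using kR c by linarith
      then have "int (kk x) \<le> \<lceil>R\<rceil>" by (simp only: of_int_le_iff)
      then show ?thesis by simp
    qed
    then have "ii x \<le> 2 * nat \<lceil>R\<rceil> + 1" using v by linarith
    then show "x \<in> (\<lambda>p. Ph (fst p) (snd p)) ` ({n. real n \<le> R} \<times> {..2 * nat \<lceil>R\<rceil> + 1})"
      using kR xe by (intro image_eqI[of _ _ "(kk x, ii x)"]) auto
  qed
  then show ?thesis by (rule finite_subset) (intro finite_imageI finite_cartesian_product finite_real_le finite_atMost)
qed

theorem h_regular: "regular_spectral_triple (A_infty shift_h) absD_h"
  by (rule orbd.regular[OF h_orbd compact_res[OF h_finite]])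

theorem mainTheorem2:
  shows "regular_spectral_triple (A_infty shift_zp) N_zp \<and>
         regular_spectral_triple (A_infty shift_h) absD_h"
  using zp_regular h_regular by blast


end
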